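(* Let $K$ be a compact space such that every separable continuous image of $K$ is metrizable, and such that every continuous image of $K$ has a dense metrizable subspace. Then every ccc continuous image of $K$ is metrizable. In particular, every $\aleph_0$-monolithic fragmentable compact space has all its ccc continuous images metrizable.
   Context: A space is ccc if it has no uncountable family of pairwise disjoint nonempty open sets. A space is $\aleph_0$-monolithic if each of its separable subspaces is metrizable. A compact space $K$ is fragmentable if there is a metric $d$ on $K$ such that every nonempty subset $A\subseteq K$ has, for every $\varepsilon>0$, a nonempty relatively open subset of $d$-diameter less than $\varepsilon$. *)

theory Defs
  imports "HOL-Analysis.Analysis"
begin

definition ccc_space :: "'a topology \<Rightarrow> bool" where
  "ccc_space X \<longleftrightarrow>
     (\<forall>\<F>. (\<forall>U\<in>\<F>. openin X U \<and> U \<noteq> {}) \<and> pairwise disjnt \<F> \<longrightarrow> countable \<F>)"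

definition aleph0_monolithic :: "'a topology \<Rightarrow> bool" where
  "aleph0_monolithic X \<longleftrightarrow>
     (\<forall>S. S \<subseteq> topspace X \<and> separable_space (subtopology X S)
          \<longrightarrow> metrizable_space (subtopology X S))"

text \<open>Fragmentability: a metric d on the points of K (not necessarily compatible
  with the topology) such that every nonempty subset A has, for every eps > 0, a nonempty
  relatively open subset of d-diameter less than eps.  "d-diameter less than eps" is written
  as: all d-distances within the set are bounded by some delta < eps.\<close>
definition fragmentable :: "'a topology \<Rightarrow> bool" where
  "fragmentable K \<longleftrightarrow>
     (\<exists>d. Metric_space (topspace K) d \<and>
       (\<forall>A. A \<subseteq> topspace K \<and> A \<noteq> {} \<longrightarrow>
          (\<forall>\<epsilon>>0. \<exists>U. openin K U \<and> A \<inter> U \<noteq> {} \<and>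
              (\<exists>\<delta><\<epsilon>. \<forall>x\<in>A \<inter> U. \<forall>y\<in>A \<inter> U. d x y \<le> \<delta>))))"

text \<open>Y is a continuous image of K (compact spaces are Hausdorff, so images are Hausdorff too).\<close>
definition cont_image :: "'a topology \<Rightarrow> 'b topology \<Rightarrow> bool" where
  "cont_image K Y \<longleftrightarrow> Hausdorff_space Y \<and>
     (\<exists>f. continuous_map K Y f \<and> f ` topspace K = topspace Y)"

definition compact_Hausdorff :: "'a topology \<Rightarrow> bool" where
  "compact_Hausdorff K \<longleftrightarrow> compact_space K \<and> Hausdorff_space K"

end

theory Submission
  imports Defs
begin

lemma regular_shrink:
  assumes "regular_space X" "openin X W" "x \<in> W"
  obtains U where "openin X U" "x \<in> U" "X closure_of U \<subseteq> W"
proof -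
  have "closedin X (topspace X - W)" "x \<in> topspace X - (topspace X - W)"
    using assms openin_subset by fastforce+
  then obtain U where "openin X U" "x \<in> U" "disjnt (topspace X - W) (X closure_of U)"
    using assms(1) unfolding regular_space by blast
  moreover have "X closure_of U \<subseteq> topspace X" by (rule closure_of_subset_topspace)
  ultimately have "X closure_of U \<subseteq> W" by (auto simp: disjnt_def)
  then show ?thesis using that \<open>openin X U\<close> \<open>x \<in> U\<close> by blast
qed

lemma ccc_countable_family:
  assumes "ccc_space Y"
    and "\<And>U. U \<in> F \<Longrightarrow> openin Y (\<phi> U) \<and> \<phi> U \<noteq> {}"
    and "\<And>U V. U \<in> F \<Longrightarrow> V \<in> F \<Longrightarrow> U \<noteq> V \<Longrightarrow> disjnt (\<phi> U) (\<phi> V)"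
  shows "countable F"
proof -
  have inj: "inj_on \<phi> F"
  proof (rule inj_onI)
    fix U V assume "U \<in> F" "V \<in> F" "\<phi> U = \<phi> V"
    then show "U = V" using assms(2,3) by (metis disjnt_self_iff_empty)
  qed
  have "countable (\<phi> ` F)"
  proof -
    have "pairwise disjnt (\<phi> ` F)"
      unfolding pairwise_def using assms(3) by blast
    moreover have "\<forall>U\<in>\<phi> ` F. openin Y U \<and> U \<noteq> {}" using assms(2) by blast
    ultimately show ?thesis using assms(1) unfolding ccc_space_def by blast
  qed
  then show ?thesis using inj countable_image_inj_on by blast
qed

lemma maxfam:
  assumes "ccc_space X"
    and dens: "\<And>W. openin X W \<Longrightarrow> W \<noteq> {} \<Longrightarrow> \<exists>U. U \<subseteq> W \<and> openin X U \<and> U \<noteq> {} \<and> P U"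
  shows "\<exists>\<U>. countable \<U> \<and> (\<forall>U\<in>\<U>. openin X U \<and> U \<noteq> {} \<and> P U) \<and> pairwise disjnt \<U> \<and>
     (\<forall>W. openin X W \<and> W \<noteq> {} \<longrightarrow> W \<inter> \<Union>\<U> \<noteq> {})"
proof -
  define \<A> where "\<A> = {\<U>. (\<forall>U\<in>\<U>. openin X U \<and> U \<noteq> {} \<and> P U) \<and> pairwise disjnt \<U>}"
  have "\<forall>C\<in>chains \<A>. \<Union>C \<in> \<A>"
  proof
    fix C assume C: "C \<in> chains \<A>"
    show "\<Union>C \<in> \<A>"
      unfolding \<A>_def
    proof (intro CollectI conjI)
      show "\<forall>U\<in>\<Union>C. openin X U \<and> U \<noteq> {} \<and> P U"
        using C unfolding chains_def \<A>_def by blast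
    next
      show "pairwise disjnt (\<Union>C)"
        unfolding pairwise_def
      proof (intro ballI impI)
        fix U V assume "U \<in> \<Union>C" "V \<in> \<Union>C" "U \<noteq> V"
        then obtain A B where "A \<in> C" "B \<in> C" "U \<in> A" "V \<in> B" by blast
        have AB: "A \<subseteq> B \<or> B \<subseteq> A" "A \<in> \<A>" "B \<in> \<A>"
          using C \<open>A \<in> C\<close> \<open>B \<in> C\<close> unfolding chains_def chain_subset_def by blast+
        have pA: "pairwise disjnt A" and pB: "pairwise disjnt B"
          using AB(2,3) unfolding \<A>_def by blast+
        show "disjnt U V"
        proof (cases "A \<subseteq> B")
          case True
          then show ?thesis using pB \<open>U \<in> A\<close> \<open>V \<in> B\<close> \<open>U \<noteq> V\<close>
            unfolding pairwise_def by blast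
        next
          case False
          then have "B \<subseteq> A" using AB(1) by blast
          then show ?thesis using pA \<open>U \<in> A\<close> \<open>V \<in> B\<close> \<open>U \<noteq> V\<close>
            unfolding pairwise_def by blast
        qed
      qed
    qed
  qed
  then obtain M where M: "M \<in> \<A>" "\<And>Z. Z \<in> \<A> \<Longrightarrow> M \<subseteq> Z \<Longrightarrow> Z = M"
    using Zorn_Lemma by metis
  have cM: "countable M"
    using assms(1) M(1) unfolding ccc_space_def \<A>_def by blast
  have M1: "\<forall>U\<in>M. openin X U \<and> U \<noteq> {} \<and> P U" "pairwise disjnt M"
      using M(1) unfolding \<A>_def by auto
  have M2: "\<forall>W. openin X W \<and> W \<noteq> {} \<longrightarrow> W \<inter> \<Union>M \<noteq> {}"
  proof (intro allI impI)
    fix W assume W: "openin X W \<and> W \<noteq> {}"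
    show "W \<inter> \<Union>M \<noteq> {}"
    proof
      assume dis: "W \<inter> \<Union>M = {}"
      obtain U where U: "U \<subseteq> W" "openin X U" "U \<noteq> {}" "P U" using dens W by blast
      have "\<forall>V\<in>M. disjnt U V \<and> disjnt V U"
        using U(1) dis unfolding disjnt_def by blast
      moreover have "pairwise disjnt M" "\<forall>V\<in>M. openin X V \<and> V \<noteq> {} \<and> P V"
        using M(1) unfolding \<A>_def by auto
      ultimately have "pairwise disjnt (insert U M)" "\<forall>V\<in>insert U M. openin X V \<and> V \<noteq> {} \<and> P V"
        using U by (simp_all add: pairwise_insert)
      then have "insert U M \<in> \<A>"
        unfolding \<A>_def by simp
      then have "insert U M = M" using M(2) by blast
      then have "U \<in> M" by blast
      then show False using dis U by blast
    qed
  qed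
  show ?thesis using cM M1 M2 by blast
qed

lemma metric_ccc_separable:
  assumes "metrizable_space X" "ccc_space X"
  shows "separable_space X"
proof -
  obtain M d where md: "Metric_space M d" "X = Metric_space.mtopology M d"
    using assms(1) unfolding metrizable_space_def by blast
  interpret Metric_space M d by (rule md(1))
  have X: "X = mtopology" by (rule md(2))
  have "\<forall>n. \<exists>\<U>. countable \<U> \<and> (\<forall>V\<in>\<U>. openin X V \<and> V \<noteq> {} \<and>
          (\<exists>x r. x \<in> M \<and> 0 < r \<and> r \<le> inverse (real (Suc n)) \<and> V = mball x r)) \<and>
          (\<forall>W. openin X W \<and> W \<noteq> {} \<longrightarrow> W \<inter> \<Union>\<U> \<noteq> {})"
  proof
    fix n
    let ?P = "\<lambda>V. \<exists>x r. x \<in> M \<and> 0 < r \<and> r \<le> inverse (real (Suc n)) \<and> V = mball x r"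
    have dens: "\<exists>U. U \<subseteq> W \<and> openin X U \<and> U \<noteq> {} \<and> ?P U" if WW: "openin X W" "W \<noteq> {}" for W
    proof -
      obtain p where p: "p \<in> W" using WW by blast
      then have pM: "p \<in> M" using WW openin_subset X by fastforce
      obtain r0 where r0: "r0 > 0" "mball p r0 \<subseteq> W"
        using WW p unfolding X openin_mtopology by blast
      define r where "r = min r0 (inverse (real (Suc n)))"
      have "r > 0" using r0 by (simp add: r_def)
      have "mball p r \<subseteq> W" using r0 mball_subset_concentric[of r r0 p] by (simp add: r_def)
      moreover have "p \<in> mball p r" using pM \<open>r > 0\<close> by simp
      moreover have "?P (mball p r)"
        using pM \<open>r > 0\<close> by (intro exI[of _ p] exI[of _ r]) (simp add: r_def)
      moreover have "openin X (mball p r)" unfolding X by simp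
      ultimately show ?thesis by blast
    qed
    from maxfam[of X ?P, OF assms(2) dens] show "\<exists>\<U>. countable \<U> \<and> (\<forall>V\<in>\<U>. openin X V \<and> V \<noteq> {} \<and> ?P V) \<and>
          (\<forall>W. openin X W \<and> W \<noteq> {} \<longrightarrow> W \<inter> \<Union>\<U> \<noteq> {})" by blast
  qed
  then obtain \<U> where U: "\<And>n. countable (\<U> n)"
    "\<And>n V. V \<in> \<U> n \<Longrightarrow> openin X V \<and> V \<noteq> {} \<and>
          (\<exists>x r. x \<in> M \<and> 0 < r \<and> r \<le> inverse (real (Suc n)) \<and> V = mball x r)"
    "\<And>n W. openin X W \<Longrightarrow> W \<noteq> {} \<Longrightarrow> W \<inter> \<Union>(\<U> n) \<noteq> {}"
    by metis
  define c where "c V = (SOME q. q \<in> V)" for V :: "'a set"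
  have c: "c V \<in> V" if "V \<noteq> {}" for V
    using that unfolding c_def by (meson ex_in_conv someI_ex)
  define C where "C = (\<Union>n. c ` \<U> n)"
  have "countable C" unfolding C_def by (intro countable_UN countable_image U(1) countableI_type)
  moreover have "C \<subseteq> topspace X"
  proof
    fix q assume "q \<in> C"
    then obtain n V where V: "V \<in> \<U> n" "q = c V" unfolding C_def by blast
    then have "openin X V" "V \<noteq> {}" using U(2) by blast+
    then show "q \<in> topspace X" using c V(2) openin_subset by blast
  qed
  moreover have "X closure_of C = topspace X"
    unfolding dense_intersects_open
  proof (intro allI impI)
    fix W assume W: "openin X W \<and> W \<noteq> {}"
    then obtain p where p: "p \<in> W" by blast
    then have pM: "p \<in> M" using W openin_subset X by fastforce
    obtain r0 where r0: "r0 > 0" "mball p r0 \<subseteq> W"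
      using W p unfolding X openin_mtopology by blast
    obtain n where n: "inverse (real (Suc n)) < r0 / 3"
      using reals_Archimedean[of "r0/3"] r0 by auto
    have "p \<in> mball p (r0/3)" using pM r0 by simp
    then have "mball p (r0/3) \<noteq> {}" by blast
    have "openin X (mball p (r0/3))" using X by simp
    have "mball p (r0/3) \<inter> \<Union>(\<U> n) \<noteq> {}"
      by (rule U(3)) fact+
    then obtain V q' where V: "V \<in> \<U> n" "q' \<in> V" "q' \<in> mball p (r0/3)" by blast
    obtain x r where xr: "x \<in> M" "0 < r" "r \<le> inverse (real (Suc n))" "V = mball x r"
      using U(2)[OF V(1)] by blast
    have cV: "c V \<in> mball x r" using c V xr by blast
    have "q' \<in> mball x r" using V(2) xr(4) by blast
    then have m1: "q' \<in> M" "x \<in> M" "d x q' < r" by simp_all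
    have m2: "d p q' < r0/3" using V(3) by simp
    have m3: "c V \<in> M" "d x (c V) < r" using cV by simp_all
    note m = m1 m2 m3
    have t1: "d p (c V) \<le> d p q' + d q' (c V)" using triangle m pM by blast
    have t2: "d q' (c V) \<le> d q' x + d x (c V)" using triangle m by blast
    have t3: "d q' x = d x q'" using commute by blast
    have "d p (c V) < r0" using t1 t2 t3 m xr n by linarith
    then have "c V \<in> mball p r0" using pM m by simp
    then have "c V \<in> W" using r0 by blast
    moreover have "c V \<in> C" unfolding C_def using V(1) by blast
    ultimately show "C \<inter> W \<noteq> {}" by blast
  qed
  ultimately show ?thesis unfolding separable_space_def by blast
qed

lemma dense_ccc:
  assumes "ccc_space Y" "Y closure_of D = topspace Y"
  shows "ccc_space (subtopology Y D)"
  unfolding ccc_space_def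
proof (intro allI impI)
  fix F assume F: "(\<forall>U\<in>F. openin (subtopology Y D) U \<and> U \<noteq> {}) \<and> disjoint F"
  have "\<forall>U\<in>F. \<exists>T. openin Y T \<and> U = T \<inter> D"
  proof
    fix U assume "U \<in> F"
    then have "openin (subtopology Y D) U" using F by blast
    then show "\<exists>T. openin Y T \<and> U = T \<inter> D" unfolding openin_subtopology .
  qed
  then obtain Op where O: "\<And>U. U \<in> F \<Longrightarrow> openin Y (Op U) \<and> U = Op U \<inter> D"
    by metis
  show "countable F"
  proof (rule ccc_countable_family[OF assms(1), of F Op])
    fix U assume "U \<in> F" then show "openin Y (Op U) \<and> Op U \<noteq> {}"
      using O F by blast
  next
    fix U V assume UV: "U \<in> F" "V \<in> F" "U \<noteq> V"
    then have "disjnt U V" using F unfolding pairwise_def by blast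
    show "disjnt (Op U) (Op V)"
    proof (rule ccontr)
      assume "\<not> disjnt (Op U) (Op V)"
      then have "openin Y (Op U \<inter> Op V)" "Op U \<inter> Op V \<noteq> {}"
        using O UV by (auto simp: disjnt_def)
      then have "D \<inter> (Op U \<inter> Op V) \<noteq> {}"
        using assms(2) unfolding dense_intersects_open by blast
      then obtain x where "x \<in> D" "x \<in> Op U" "x \<in> Op V" by blast
      then have "x \<in> U" "x \<in> V" using O UV by blast+
      then show False using \<open>disjnt U V\<close> by (auto simp: disjnt_def)
    qed
  qed
qed

lemma transfer_image:
  fixes K :: "'a topology" and Y :: "'b topology"
  assumes "cont_image K Y"
  obtains Y' :: "'a set topology" where "cont_image K Y'" "Y homeomorphic_space Y'"
proof -
  obtain f where f: "continuous_map K Y f" "f ` topspace K = topspace Y" and H: "Hausdorff_space Y"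
    using assms unfolding cont_image_def by blast
  define g where "g y = {x \<in> topspace K. f x = y}" for y
  define h where "h S = f (SOME x. x \<in> S)" for S
  define A where "A = g ` topspace Y"
  define Y' where "Y' = pullback_topology A h Y"
  have hg: "h (g y) = y" if "y \<in> topspace Y" for y
  proof -
    have "y \<in> f ` topspace K" using that f(2) by simp
    then have "g y \<noteq> {}" unfolding g_def by blast
    then have "(SOME x. x \<in> g y) \<in> g y" by (meson ex_in_conv someI_ex)
    then show ?thesis unfolding h_def g_def by simp
  qed
  have hA: "h S \<in> topspace Y" if "S \<in> A" for S
  proof -
    obtain y where "y \<in> topspace Y" "S = g y" using \<open>S \<in> A\<close> unfolding A_def by blast
    then show ?thesis using hg by simp
  qed
  have tY': "topspace Y' = A"
    unfolding Y'_def topspace_pullback_topology using hA by blast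
  have hm: "homeomorphic_maps Y Y' g h"
    unfolding homeomorphic_maps_def
  proof (intro conjI ballI)
    show "continuous_map Y Y' g"
      unfolding Y'_def
    proof (rule continuous_map_pullback')
      have "continuous_map Y Y id" by simp
      moreover have "\<And>y. y \<in> topspace Y \<Longrightarrow> (h \<circ> g) y = id y" using hg by simp
      ultimately show "continuous_map Y Y (h \<circ> g)"
        using continuous_map_eq by (metis (no_types, lifting))
      show "topspace Y \<subseteq> g -` A" unfolding A_def by blast
    qed
    show "continuous_map Y' Y h"
      unfolding Y'_def using continuous_map_pullback[of Y Y id A h] by simp
    show "h (g y) = y" if "y \<in> topspace Y" for y using hg that by blast
    show "g (h S) = S" if SS: "S \<in> topspace Y'" for S
    proof -
      obtain y where "y \<in> topspace Y" "S = g y" using SS unfolding tY' A_def by blast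
      then show ?thesis using hg by simp
    qed
  qed
  then have hs: "Y homeomorphic_space Y'"
    using homeomorphic_maps_imp_homeomorphic_space by blast
  have "Hausdorff_space Y'" using H hs homeomorphic_Hausdorff_space by blast
  moreover have "continuous_map K Y' (g \<circ> f)"
    using hm f(1) unfolding homeomorphic_maps_def by (meson continuous_map_compose)
  moreover have "(g \<circ> f) ` topspace K = topspace Y'"
    using f(2) unfolding tY' A_def image_comp[symmetric] by simp
  ultimately have "cont_image K Y'" unfolding cont_image_def by blast
  then show ?thesis using that hs by blast
qed

lemma homeomorphic_ccc:
  assumes "X homeomorphic_space Y" "ccc_space X"
  shows "ccc_space Y"
proof -
  obtain f g where fg: "homeomorphic_maps X Y f g"
    using assms(1) homeomorphic_space_def by blast
  then have hg: "homeomorphic_map Y X g"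
    using homeomorphic_maps_map by blast
  show ?thesis
    unfolding ccc_space_def
  proof (intro allI impI)
    fix F assume F: "(\<forall>U\<in>F. openin Y U \<and> U \<noteq> {}) \<and> disjoint F"
    show "countable F"
    proof (rule ccc_countable_family[OF assms(2), of F "image g"])
      fix U assume "U \<in> F"
      then have U: "openin Y U" "U \<noteq> {}" using F by blast+
      then have "openin X (g ` U)"
        using homeomorphic_map_openness_eq[OF hg, of U] by blast
      then show "openin X (g ` U) \<and> g ` U \<noteq> {}" using U(2) by blast
    next
      fix U V assume UV: "U \<in> F" "V \<in> F" "U \<noteq> V"
      have "disjnt U V" using F UV unfolding pairwise_def by blast
      have "openin Y U" "openin Y V" using F UV by blast+
      then have sub: "U \<subseteq> topspace Y" "V \<subseteq> topspace Y" by (simp_all add: openin_subset)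
      have inj: "inj_on g (topspace Y)"
        using hg by (rule homeomorphic_imp_injective_map)
      show "disjnt (g ` U) (g ` V)"
        unfolding disjnt_def
      proof (rule ccontr)
        assume "g ` U \<inter> g ` V \<noteq> {}"
        then obtain u v where "u \<in> U" "v \<in> V" "g u = g v" by blast
        then have "u = v" using inj sub unfolding inj_on_def by blast
        then show False using \<open>u \<in> U\<close> \<open>v \<in> V\<close> \<open>disjnt U V\<close> unfolding disjnt_def by blast
      qed
    qed
  qed
qed

lemma part1:
  fixes K :: "'a topology" and Y :: "'b topology"
  assumes H2: "\<forall>Y :: 'a set topology. cont_image K Y \<and> separable_space Y \<longrightarrow> metrizable_space Y"
    and H3: "\<forall>Y :: 'a set topology. cont_image K Y \<longrightarrow>
                (\<exists>D. D \<subseteq> topspace Y \<and> Y closure_of D = topspace Y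
                     \<and> metrizable_space (subtopology Y D))"
    and Y: "cont_image K Y" "ccc_space Y"
  shows "metrizable_space Y"
proof -
  obtain Y' :: "'a set topology" where Y': "cont_image K Y'" "Y homeomorphic_space Y'"
    using transfer_image[OF Y(1)] by blast
  have c: "ccc_space Y'" using homeomorphic_ccc[OF Y'(2) Y(2)] .
  from H3[rule_format, OF Y'(1)] obtain D where D: "D \<subseteq> topspace Y'" "Y' closure_of D = topspace Y'"
    "metrizable_space (subtopology Y' D)" by blast
  have "ccc_space (subtopology Y' D)" using dense_ccc[OF c D(2)] .
  then have "separable_space (subtopology Y' D)" using metric_ccc_separable D(3) by blast
  then obtain C where C: "countable C" "C \<subseteq> topspace (subtopology Y' D)"
    "(subtopology Y' D) closure_of C = topspace (subtopology Y' D)"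
    unfolding separable_space_def by blast
  have CD: "C \<subseteq> D" using C(2) by simp
  have "D \<subseteq> Y' closure_of C"
  proof -
    have "topspace (subtopology Y' D) = D" using D(1) by auto
    then have "D = D \<inter> Y' closure_of (D \<inter> C)" using C(3) closure_of_subtopology by metis
    moreover have "D \<inter> C = C" using CD by blast
    ultimately have "D = D \<inter> Y' closure_of C" by simp
    then show ?thesis by (metis Int_lower2)
  qed
  then have "Y' closure_of D \<subseteq> Y' closure_of (Y' closure_of C)"
    by (rule closure_of_mono)
  then have "Y' closure_of D \<subseteq> Y' closure_of C" by simp
  then have "topspace Y' \<subseteq> Y' closure_of C" using D(2) by simp
  then have "Y' closure_of C = topspace Y'"
    by (rule subset_antisym[OF closure_of_subset_topspace])
  moreover have "C \<subseteq> topspace Y'" using CD D(1) by (rule subset_trans)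
  ultimately have "separable_space Y'" unfolding separable_space_def using C(1) by blast
  then have "metrizable_space Y'" using H2[rule_format, of Y'] Y'(1) by blast
  then show ?thesis using homeomorphic_metrizable_space[OF Y'(2)] by blast
qed

lemma compact_sc_metrizable:
  assumes cY: "compact_space Y" and hY: "Hausdorff_space Y" and sY: "second_countable Y"
  shows "metrizable_space Y"
proof -
  obtain \<B> where B: "countable \<B>" "\<And>V. V \<in> \<B> \<Longrightarrow> openin Y V"
    "\<And>U x. openin Y U \<Longrightarrow> x \<in> U \<Longrightarrow> \<exists>V\<in>\<B>. x \<in> V \<and> V \<subseteq> U"
    using sY unfolding second_countable_def by metis
  have reg: "regular_space Y" using cY hY by (rule compact_Hausdorff_imp_regular_space)
  have nor: "normal_space Y" using cY hY by (simp add: compact_Hausdorff_or_regular_imp_normal_space)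
  define I where "I = {p. fst p \<in> \<B> \<and> snd p \<in> \<B> \<and> Y closure_of (fst p) \<subseteq> snd p}"
  have cI: "countable I"
  proof -
    have "I \<subseteq> \<B> \<times> \<B>" unfolding I_def by auto
    moreover have "countable (\<B> \<times> \<B>)" using B(1) by simp
    ultimately show ?thesis by (rule countable_subset)
  qed
  have "\<forall>p\<in>I. \<exists>g. continuous_map Y (top_of_set {0..1::real}) g \<and>
          g ` (Y closure_of (fst p)) \<subseteq> {0} \<and> g ` (topspace Y - snd p) \<subseteq> {1}"
  proof
    fix p assume p: "p \<in> I"
    have "closedin Y (Y closure_of (fst p))" by simp
    moreover have "closedin Y (topspace Y - snd p)" using p B(2) unfolding I_def by auto
    moreover have "disjnt (Y closure_of (fst p)) (topspace Y - snd p)"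
      using p unfolding I_def disjnt_def by auto
    ultimately obtain g where "continuous_map Y (top_of_set {0..1::real}) g"
      "g ` (Y closure_of (fst p)) \<subseteq> {0}" "g ` (topspace Y - snd p) \<subseteq> {1}"
      using Urysohn_lemma[OF nor, of "Y closure_of (fst p)" "topspace Y - snd p" 0 1] by auto
    then show "\<exists>g. continuous_map Y (top_of_set {0..1::real}) g \<and>
          g ` (Y closure_of (fst p)) \<subseteq> {0} \<and> g ` (topspace Y - snd p) \<subseteq> {1}" by blast
  qed
  then obtain G where G: "\<And>p. p \<in> I \<Longrightarrow> continuous_map Y (top_of_set {0..1::real}) (G p)"
    "\<And>p. p \<in> I \<Longrightarrow> G p ` (Y closure_of (fst p)) \<subseteq> {0}"
    "\<And>p. p \<in> I \<Longrightarrow> G p ` (topspace Y - snd p) \<subseteq> {1}"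
    by metis
  define \<Phi> where "\<Phi> y = (\<lambda>p\<in>I. G p y)" for y
  let ?P = "product_topology (\<lambda>p. euclideanreal) I"
  have cont: "continuous_map Y ?P \<Phi>"
    unfolding continuous_map_componentwise
  proof (intro conjI ballI)
    show "\<Phi> ` topspace Y \<subseteq> extensional I" unfolding \<Phi>_def by auto
    fix p assume "p \<in> I"
    then have "continuous_map Y euclideanreal (G p)"
      using G(1) continuous_map_in_subtopology by blast
    moreover have "\<And>y. \<Phi> y p = G p y" using \<open>p \<in> I\<close> unfolding \<Phi>_def by simp
    ultimately show "continuous_map Y euclideanreal (\<lambda>x. \<Phi> x p)" by simp
  qed
  have inj: "inj_on \<Phi> (topspace Y)"
  proof (rule inj_onI)
    fix y z assume yz: "y \<in> topspace Y" "z \<in> topspace Y" "\<Phi> y = \<Phi> z"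
    show "y = z"
    proof (rule ccontr)
      assume "y \<noteq> z"
      have "closedin Y {z}" using hY yz(2) by (simp add: Hausdorff_imp_t1_space closedin_t1_singleton)
      then have "openin Y (topspace Y - {z})" by blast
      moreover have "y \<in> topspace Y - {z}" using yz(1) \<open>y \<noteq> z\<close> by blast
      ultimately obtain B2 where B2: "B2 \<in> \<B>" "y \<in> B2" "B2 \<subseteq> topspace Y - {z}"
        using B(3) by blast
      obtain N where N: "openin Y N" "y \<in> N" "Y closure_of N \<subseteq> B2"
        using regular_shrink[OF reg B(2)[OF B2(1)] B2(2)] by blast
      obtain B1 where B1: "B1 \<in> \<B>" "y \<in> B1" "B1 \<subseteq> N"
        using B(3)[OF N(1) N(2)] by blast
      have "Y closure_of B1 \<subseteq> B2"
        using closure_of_mono[OF B1(3)] N(3) by (rule subset_trans)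
      then have pI: "(B1, B2) \<in> I" unfolding I_def using B1 B2 by simp
      have "y \<in> Y closure_of B1" using B1(2) yz(1) closure_of_subset[of B1 Y]
        B(2)[OF B1(1)] openin_subset by blast
      then have "G (B1, B2) y = 0" using G(2)[OF pI] by auto
      moreover have "z \<in> topspace Y - B2" using B2(3) yz(2) by blast
      then have "G (B1, B2) z = 1" using G(3)[OF pI] by auto
      moreover have "G (B1, B2) y = G (B1, B2) z"
        using yz(3) pI unfolding \<Phi>_def by (metis restrict_apply')
      ultimately show False by simp
    qed
  qed
  have hP: "Hausdorff_space ?P"
    by (simp add: Hausdorff_space_product_topology)
  have emb: "embedding_map Y ?P \<Phi>"
    by (rule continuous_imp_embedding_map[OF cont cY hP inj])
  have "metrizable_space ?P"
  proof -
    have "countable {i \<in> I. \<not> (\<exists>a. topspace euclideanreal \<subseteq> {a})}"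
      using cI by (rule countable_subset[rotated]) blast
    then show ?thesis
      unfolding metrizable_space_product_topology by (simp add: metrizable_space_euclidean)
  qed
  then have "metrizable_space (subtopology ?P (\<Phi> ` topspace Y))"
    by (rule metrizable_space_subtopology)
  then show ?thesis
    using homeomorphic_metrizable_space[OF embedding_map_imp_homeomorphic_space[OF emb]] by blast
qed

lemma compact_metrizable_sc:
  assumes cX: "compact_space X" and mX: "metrizable_space X"
  shows "second_countable X"
proof -
  obtain M d where md: "Metric_space M d" "X = Metric_space.mtopology M d"
    using mX unfolding metrizable_space_def by blast
  interpret Metric_space M d by (rule md(1))
  have X: "X = mtopology" by (rule md(2))
  have tb: "mtotally_bounded M"
    using cX unfolding X compact_space_eq_mcomplete_mtotally_bounded by blast
  have "\<forall>n. \<exists>K. finite K \<and> K \<subseteq> M \<and> M \<subseteq> (\<Union>x\<in>K. mball x (inverse (real (Suc n))))"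
  proof
    fix n
    have "inverse (real (Suc n)) > 0" by simp
    then show "\<exists>K. finite K \<and> K \<subseteq> M \<and> M \<subseteq> (\<Union>x\<in>K. mball x (inverse (real (Suc n))))"
      using tb unfolding mtotally_bounded_def by blast
  qed
  then obtain K where K: "\<And>n. finite (K n)" "\<And>n. K n \<subseteq> M"
    "\<And>n. M \<subseteq> (\<Union>x\<in>K n. mball x (inverse (real (Suc n))))"
    by metis
  define \<B> where "\<B> = (\<Union>n. (\<lambda>x. mball x (inverse (real (Suc n)))) ` K n)"
  have "countable \<B>" unfolding \<B>_def
    by (intro countable_UN countable_image countable_finite K(1) countableI_type)
  moreover have "\<forall>V\<in>\<B>. openin X V" unfolding \<B>_def X by blast
  moreover have "\<forall>U x. openin X U \<and> x \<in> U \<longrightarrow> (\<exists>V\<in>\<B>. x \<in> V \<and> V \<subseteq> U)"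
  proof (intro allI impI)
    fix U x assume Ux: "openin X U \<and> x \<in> U"
    then obtain r where r: "r > 0" "mball x r \<subseteq> U" unfolding X openin_mtopology by blast
    have xM: "x \<in> M" using Ux openin_subset X by fastforce
    obtain n where n: "inverse (real (Suc n)) < r / 2"
      using reals_Archimedean[of "r/2"] r by auto
    obtain c where c: "c \<in> K n" "x \<in> mball c (inverse (real (Suc n)))"
      using K(3)[of n] xM by blast
    have cM: "c \<in> M" using c(1) K(2) by blast
    have dcx: "d c x < inverse (real (Suc n))" using c(2) by simp
    have "mball c (inverse (real (Suc n))) \<subseteq> mball x r"
    proof
      fix y assume "y \<in> mball c (inverse (real (Suc n)))"
      then have yM: "y \<in> M" and dcy: "d c y < inverse (real (Suc n))" by simp_all
      have "d x y \<le> d x c + d c y" using triangle xM cM yM by blast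
      moreover have "d x c = d c x" using commute by blast
      ultimately have "d x y < r" using dcx dcy n by linarith
      then show "y \<in> mball x r" using xM yM by simp
    qed
    then have "mball c (inverse (real (Suc n))) \<subseteq> U" using r(2) by (rule subset_trans)
    moreover have "mball c (inverse (real (Suc n))) \<in> \<B>" unfolding \<B>_def using c(1) by blast
    ultimately show "\<exists>V\<in>\<B>. x \<in> V \<and> V \<subseteq> U" using c(2) by blast
  qed
  ultimately show ?thesis unfolding second_countable_def by blast
qed

lemma image_second_countable:
  assumes cX: "compact_space X" and sX: "second_countable X"
    and f: "continuous_map X Y f" "f ` topspace X = topspace Y" and hY: "Hausdorff_space Y"
  shows "second_countable Y"
proof -
  obtain \<B> where B: "countable \<B>" "\<And>V. V \<in> \<B> \<Longrightarrow> openin X V"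
    "\<And>U x. openin X U \<Longrightarrow> x \<in> U \<Longrightarrow> \<exists>V\<in>\<B>. x \<in> V \<and> V \<subseteq> U"
    using sX unfolding second_countable_def by metis
  define \<C> where "\<C> = Union ` {F. finite F \<and> F \<subseteq> \<B>}"
  define w where "w U = topspace Y - f ` (topspace X - U)" for U
  have cC: "countable \<C>" unfolding \<C>_def
    using B(1) by (intro countable_image countable_Collect_finite_subset)
  have oC: "openin X U" if UC: "U \<in> \<C>" for U
  proof -
    obtain F where "F \<subseteq> \<B>" "U = \<Union>F" using UC unfolding \<C>_def by blast
    then show ?thesis using B(2) by blast
  qed
  have ow: "openin Y (w U)" if "openin X U" for U
  proof -
    have "closedin X (topspace X - U)" using that by blast
    then have "compactin X (topspace X - U)" using cX by (simp add: closedin_compact_space)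
    then have "compactin Y (f ` (topspace X - U))" using f(1) by (rule image_compactin)
    then have "closedin Y (f ` (topspace X - U))" using hY compactin_imp_closedin by blast
    then show ?thesis unfolding w_def by blast
  qed
  have "countable (w ` \<C>)" using cC by blast
  moreover have "\<forall>V\<in>w ` \<C>. openin Y V" using ow oC by blast
  moreover have "\<forall>Ob y. openin Y Ob \<and> y \<in> Ob \<longrightarrow> (\<exists>V\<in>w ` \<C>. y \<in> V \<and> V \<subseteq> Ob)"
  proof (intro allI impI)
    fix Ob y assume Oy: "openin Y Ob \<and> y \<in> Ob"
    have yY: "y \<in> topspace Y" using Oy openin_subset by blast
    define Fy where "Fy = {x \<in> topspace X. f x \<in> {y}}"
    have "closedin Y {y}" using hY yY by (simp add: Hausdorff_imp_t1_space closedin_t1_singleton)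
    then have "closedin X Fy" unfolding Fy_def using f(1) by (rule closedin_continuous_map_preimage[rotated])
    then have cF: "compactin X Fy" using cX by (simp add: closedin_compact_space)
    define P where "P = {x \<in> topspace X. f x \<in> Ob}"
    have oP: "openin X P" unfolding P_def using f(1) Oy by (simp add: openin_continuous_map_preimage)
    define \<U> where "\<U> = {V \<in> \<B>. V \<subseteq> P}"
    have "\<forall>U\<in>\<U>. openin X U" unfolding \<U>_def using B(2) by blast
    moreover have "Fy \<subseteq> \<Union>\<U>"
    proof
      fix x assume "x \<in> Fy"
      then have "x \<in> P" using Oy unfolding Fy_def P_def by simp
      then obtain V where "V \<in> \<B>" "x \<in> V" "V \<subseteq> P" using B(3)[OF oP] by blast
      then show "x \<in> \<Union>\<U>" unfolding \<U>_def by blast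
    qed
    ultimately obtain F where F: "finite F" "F \<subseteq> \<U>" "Fy \<subseteq> \<Union>F"
      using cF unfolding compactin_def by meson
    have UC: "\<Union>F \<in> \<C>" unfolding \<C>_def using F(1,2) unfolding \<U>_def by blast
    have UP: "\<Union>F \<subseteq> P" using F(2) unfolding \<U>_def by blast
    have "y \<in> w (\<Union>F)"
    proof -
      have "y \<notin> f ` (topspace X - \<Union>F)"
      proof
        assume "y \<in> f ` (topspace X - \<Union>F)"
        then obtain x where "x \<in> topspace X" "x \<notin> \<Union>F" "f x = y" by blast
        then have "x \<in> Fy" unfolding Fy_def by simp
        then show False using F(3) \<open>x \<notin> \<Union>F\<close> by blast
      qed
      then show ?thesis unfolding w_def using yY by blast
    qed
    moreover have "w (\<Union>F) \<subseteq> Ob"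
    proof
      fix z assume z: "z \<in> w (\<Union>F)"
      then have "z \<in> topspace Y" unfolding w_def by blast
      then obtain x where x: "x \<in> topspace X" "f x = z" using f(2) by (metis imageE)
      have "x \<in> \<Union>F"
      proof (rule ccontr)
        assume "x \<notin> \<Union>F"
        then have "z \<in> f ` (topspace X - \<Union>F)" using x by blast
        then show False using z unfolding w_def by blast
      qed
      then have "x \<in> P" using UP by blast
      then show "z \<in> Ob" using x unfolding P_def by simp
    qed
    ultimately show "\<exists>V\<in>w ` \<C>. y \<in> V \<and> V \<subseteq> Ob" using UC by blast
  qed
  ultimately show ?thesis unfolding second_countable_def by blast
qed

lemma frag_ccc_separable:
  assumes cX: "compact_space X" and hX: "Hausdorff_space X" and ccX: "ccc_space X"
    and fX: "fragmentable X"
  shows "separable_space X"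
proof -
  obtain d where dM: "Metric_space (topspace X) d" and fr: "\<forall>A. A \<subseteq> topspace X \<and> A \<noteq> {} \<longrightarrow>
          (\<forall>\<epsilon>>0. \<exists>U. openin X U \<and> A \<inter> U \<noteq> {} \<and>
              (\<exists>\<delta><\<epsilon>. \<forall>x\<in>A \<inter> U. \<forall>y\<in>A \<inter> U. d x y \<le> \<delta>))"
    using fX unfolding fragmentable_def by blast
  interpret Metric_space "topspace X" d by (rule dM)
  have sub_cl: "U \<subseteq> X closure_of U" if "openin X U" for U
    using that by (simp add: closure_of_subset openin_subset)
  have reg: "regular_space X" using cX hX by (rule compact_Hausdorff_imp_regular_space)
  define Q where "Q n U \<longleftrightarrow> (\<exists>Ob. openin X Ob \<and> X closure_of U \<subseteq> Ob \<and>
      (\<forall>a\<in>Ob. \<forall>b\<in>Ob. d a b < inverse (real (Suc n))))" for n U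
  have dens: "\<exists>U. U \<subseteq> W \<and> openin X U \<and> U \<noteq> {} \<and> Q n U"
    if W: "openin X W" "W \<noteq> {}" for W n
  proof -
    have "W \<subseteq> topspace X" using W(1) by (rule openin_subset)
    moreover have "inverse (real (Suc n)) > 0" by simp
    ultimately obtain U0 \<delta> where U0: "openin X U0" "W \<inter> U0 \<noteq> {}" "\<delta> < inverse (real (Suc n))"
      "\<forall>x\<in>W \<inter> U0. \<forall>y\<in>W \<inter> U0. d x y \<le> \<delta>"
      using fr W(2) by meson
    define Ob where "Ob = W \<inter> U0"
    have oOb: "openin X Ob" unfolding Ob_def using W(1) U0(1) by blast
    obtain p where p: "p \<in> Ob" using U0(2) unfolding Ob_def by blast
    obtain N where N: "openin X N" "p \<in> N" "X closure_of N \<subseteq> Ob"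
      using regular_shrink[OF reg oOb p] by blast
    have "N \<subseteq> X closure_of N" using N(1) by (simp add: closure_of_subset openin_subset)
    then have "N \<subseteq> W" using N(3) unfolding Ob_def by blast
    moreover have "Q n N" unfolding Q_def
    proof (intro exI conjI)
      show "openin X Ob" by (rule oOb)
      show "X closure_of N \<subseteq> Ob" by (rule N(3))
      show "\<forall>a\<in>Ob. \<forall>b\<in>Ob. d a b < inverse (real (Suc n))"
      proof (intro ballI)
        fix a b assume "a \<in> Ob" "b \<in> Ob"
        then have "d a b \<le> \<delta>" using U0(4) unfolding Ob_def by blast
        then show "d a b < inverse (real (Suc n))" using U0(3) by linarith
      qed
    qed
    ultimately show ?thesis using N(1,2) by blast
  qed
  have "\<forall>n. \<exists>\<U>. countable \<U> \<and> (\<forall>U\<in>\<U>. openin X U \<and> U \<noteq> {} \<and> Q n U) \<and> pairwise disjnt \<U> \<and>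
     (\<forall>W. openin X W \<and> W \<noteq> {} \<longrightarrow> W \<inter> \<Union>\<U> \<noteq> {})"
  proof
    fix n
    show "\<exists>\<U>. countable \<U> \<and> (\<forall>U\<in>\<U>. openin X U \<and> U \<noteq> {} \<and> Q n U) \<and> pairwise disjnt \<U> \<and>
     (\<forall>W. openin X W \<and> W \<noteq> {} \<longrightarrow> W \<inter> \<Union>\<U> \<noteq> {})"
      by (rule maxfam[OF ccX dens])
  qed
  then obtain Uf where Uf: "\<And>n. countable (Uf n)"
    "\<And>n U. U \<in> Uf n \<Longrightarrow> openin X U \<and> U \<noteq> {} \<and> Q n U"
    "\<And>n W. openin X W \<Longrightarrow> W \<noteq> {} \<Longrightarrow> W \<inter> \<Union>(Uf n) \<noteq> {}"
    by metis
  define G where "G n = \<Union>(Uf n)" for n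
  have oG: "openin X (G n)" for n unfolding G_def using Uf(2) by blast
  have dG: "X closure_of (G n) = topspace X" for n
    unfolding dense_intersects_open
  proof (intro allI impI)
    fix T assume "openin X T \<and> T \<noteq> {}"
    then have "T \<inter> \<Union>(Uf n) \<noteq> {}" using Uf(3) by blast
    then show "G n \<inter> T \<noteq> {}" unfolding G_def by blast
  qed
  have baire: "X closure_of \<Inter>(range G) = topspace X"
  proof (rule Baire_category)
    show "completely_metrizable_space X \<or> locally_compact_space X \<and> regular_space X"
      using cX reg compact_imp_locally_compact_space by blast
    show "countable (range G)" by simp
    show "\<And>T. T \<in> range G \<Longrightarrow> openin X T \<and> X closure_of T = topspace X"
      using oG dG by blast
  qed
  define \<V> where "\<V> = (\<Union>n. Uf n)"
  have cV: "countable \<V>" unfolding \<V>_def by (intro countable_UN Uf(1) countableI_type)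
  have oV: "openin X U" if "U \<in> \<V>" for U using that Uf(2) unfolding \<V>_def by blast
  define \<Phi> where "\<Phi> = Inter ` {F. finite F \<and> F \<subseteq> \<V> \<and> F \<noteq> {}}"
  have cPhi: "countable \<Phi>"
  proof -
    have "{F. finite F \<and> F \<subseteq> \<V> \<and> F \<noteq> {}} \<subseteq> {F. finite F \<and> F \<subseteq> \<V>}" by blast
    moreover have "countable {F. finite F \<and> F \<subseteq> \<V>}" using cV by (rule countable_Collect_finite_subset)
    ultimately have "countable {F. finite F \<and> F \<subseteq> \<V> \<and> F \<noteq> {}}" by (rule countable_subset)
    then show ?thesis unfolding \<Phi>_def by (rule countable_image)
  qed
  define c where "c S = (SOME q. q \<in> S)" for S :: "'a set"
  have c: "c S \<in> S" if "S \<noteq> {}" for S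
    using that unfolding c_def by (meson ex_in_conv someI_ex)
  define C where "C = c ` {S \<in> \<Phi>. S \<noteq> {}}"
  have cC: "countable C" unfolding C_def using cPhi by simp
  have CX: "C \<subseteq> topspace X"
  proof
    fix q assume "q \<in> C"
    then obtain S where S: "S \<in> \<Phi>" "S \<noteq> {}" "q = c S" unfolding C_def by blast
    then obtain F where F: "finite F" "F \<subseteq> \<V>" "F \<noteq> {}" "S = \<Inter>F" unfolding \<Phi>_def by blast
    then obtain U where "U \<in> F" by blast
    then have "S \<subseteq> U" "openin X U" using F oV by blast+
    then show "q \<in> topspace X" using c[OF S(2)] S(3) openin_subset by blast
  qed
  have key: "\<Inter>(range G) \<subseteq> X closure_of C"
  proof
    fix x assume x: "x \<in> \<Inter>(range G)"
    then have "x \<in> G 0" by blast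
    then have xX: "x \<in> topspace X" using oG openin_subset by blast
    have "\<forall>n. \<exists>U. U \<in> Uf n \<and> x \<in> U" using x unfolding G_def by blast
    then obtain Ux where Ux: "\<And>n. Ux n \<in> Uf n" "\<And>n. x \<in> Ux n" by metis
    have oUx: "openin X (Ux n)" for n using Uf(2)[OF Ux(1)] by blast
    have QUx: "Q n (Ux n)" for n using Uf(2)[OF Ux(1)] by blast
    show "x \<in> X closure_of C"
      unfolding in_closure_of
    proof (intro conjI allI impI)
      show "x \<in> topspace X" by (rule xX)
      fix W assume W: "x \<in> W \<and> openin X W"
      define A where "A = topspace X - W"
      define \<U> where "\<U> = insert A (range (\<lambda>n. X closure_of (Ux n)))"
      have "\<Inter>\<U> = {}"
      proof (rule ccontr)
        assume "\<Inter>\<U> \<noteq> {}"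
        then obtain y where y: "y \<in> \<Inter>\<U>" by blast
        then have yA: "y \<in> A" unfolding \<U>_def by blast
        have yX: "y \<in> topspace X" using yA unfolding A_def by blast
        have "d x y < inverse (real (Suc n))" for n
        proof -
          obtain Ob where Ob: "openin X Ob" "X closure_of (Ux n) \<subseteq> Ob"
            "\<forall>a\<in>Ob. \<forall>b\<in>Ob. d a b < inverse (real (Suc n))"
            using QUx[of n] unfolding Q_def by blast
          have "y \<in> X closure_of (Ux n)" using y unfolding \<U>_def by blast
          moreover have "x \<in> X closure_of (Ux n)"
            using Ux(2)[of n] sub_cl[OF oUx[of n]] by blast
          ultimately show ?thesis using Ob by blast
        qed
        then have "d x y = 0"
        proof -
          assume H: "\<And>n. d x y < inverse (real (Suc n))"
          show "d x y = 0"
          proof (rule ccontr)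
            assume "d x y \<noteq> 0"
            then have "d x y > 0" using nonneg[of x y] by linarith
            then obtain n where "inverse (real (Suc n)) < d x y"
              using reals_Archimedean by blast
            then show False using H[of n] by linarith
          qed
        qed
        then have "x = y" using xX yX by simp
        then show False using yA W unfolding A_def by blast
      qed
      moreover have "\<forall>T\<in>\<U>. closedin X T"
      proof -
        have "closedin X A" unfolding A_def using W by blast
        moreover have "closedin X (X closure_of (Ux n))" for n by simp
        ultimately show ?thesis unfolding \<U>_def by blast
      qed
      ultimately have "\<not> (\<forall>F. finite F \<and> F \<subseteq> \<U> \<longrightarrow> \<Inter>F \<noteq> {})"
        using compact_space_fip[THEN iffD1, OF cX, rule_format, of \<U>] by blast
      then obtain F where F: "finite F" "F \<subseteq> \<U>" "\<Inter>F = {}" by blast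
      have sub: "F - {A} \<subseteq> (\<lambda>n. X closure_of (Ux n)) ` UNIV" using F(2) unfolding \<U>_def by blast
      have fin: "finite (F - {A})" using F(1) by simp
      obtain N where N: "finite N" "F - {A} = (\<lambda>n. X closure_of (Ux n)) ` N"
        using finite_subset_image[OF fin sub] by blast
      define S where "S = \<Inter>(Ux ` insert 0 N)"
      have "S \<in> \<Phi>" unfolding \<Phi>_def S_def \<V>_def using N(1) Ux(1) by blast
      moreover have "x \<in> S" unfolding S_def using Ux(2) by blast
      ultimately have SC: "c S \<in> C" "c S \<in> S" using c unfolding C_def by blast+
      have "c S \<in> W"
      proof (rule ccontr)
        assume nW: "c S \<notin> W"
        have cSX: "c S \<in> topspace X" using SC(1) CX by blast
        have "c S \<in> \<Inter>F"
        proof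
          fix T assume "T \<in> F"
          show "c S \<in> T"
          proof (cases "T = A")
            case True then show ?thesis using nW cSX unfolding A_def by blast
          next
            case False
            then have "T \<in> F - {A}" using \<open>T \<in> F\<close> by blast
            then obtain n where n: "n \<in> N" "T = X closure_of (Ux n)" using N(2) by blast
            then have "c S \<in> Ux n" using SC(2) unfolding S_def by blast
            then show ?thesis using n(2) sub_cl[OF oUx[of n]] by blast
          qed
        qed
        then show False using F(3) by blast
      qed
      then show "\<exists>y. y \<in> C \<and> y \<in> W" using SC(1) by blast
    qed
  qed
  have "topspace X \<subseteq> X closure_of C"
  proof -
    have "X closure_of \<Inter>(range G) \<subseteq> X closure_of (X closure_of C)"
      using key by (rule closure_of_mono)
    then show ?thesis using baire by simp
  qed
  then have "X closure_of C = topspace X"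
    by (rule subset_antisym[OF closure_of_subset_topspace])
  then show ?thesis unfolding separable_space_def using cC CX by blast
qed

lemma irreducible_closed:
  assumes cK: "compact_space K" and f: "continuous_map K Y f" and surj: "f ` topspace K = topspace Y"
    and hY: "Hausdorff_space Y"
  obtains L where "closedin K L" "f ` L = topspace Y"
    "\<And>L'. closedin K L' \<Longrightarrow> L' \<subseteq> L \<Longrightarrow> f ` L' = topspace Y \<Longrightarrow> L' = L"
proof -
  define \<A> where "\<A> = {U. openin K U \<and> f ` (topspace K - U) = topspace Y}"
  have fsub: "f ` S \<subseteq> topspace Y" if "S \<subseteq> topspace K" for S
    using continuous_map_image_subset_topspace[OF f] that by blast
  have "\<forall>C\<in>chains \<A>. \<Union>C \<in> \<A>"
  proof
    fix C assume C: "C \<in> chains \<A>"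
    have CA: "C \<subseteq> \<A>" and chC: "\<And>U V. U \<in> C \<Longrightarrow> V \<in> C \<Longrightarrow> U \<subseteq> V \<or> V \<subseteq> U"
      using C unfolding chains_def chain_subset_def by blast+
    have oC: "openin K (\<Union>C)" using CA unfolding \<A>_def by blast
    have "topspace Y \<subseteq> f ` (topspace K - \<Union>C)"
    proof
      fix y assume yY: "y \<in> topspace Y"
      define Fy where "Fy = {x \<in> topspace K. f x \<in> {y}}"
      have "closedin Y {y}" using hY yY by (simp add: Hausdorff_imp_t1_space closedin_t1_singleton)
      then have cFy: "closedin K Fy" unfolding Fy_def using f by (rule closedin_continuous_map_preimage[rotated])
      define \<U> where "\<U> = insert Fy ((\<lambda>U. Fy - U) ` C)"
      have "\<forall>T\<in>\<U>. closedin K T"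
      proof
        fix T assume "T \<in> \<U>"
        then consider "T = Fy" | U where "U \<in> C" "T = Fy - U" unfolding \<U>_def by blast
        then show "closedin K T"
        proof cases
          case 1 then show ?thesis using cFy by simp
        next
          case 2
          then have "openin K U" using CA unfolding \<A>_def by blast
          then show ?thesis using cFy 2(2) by blast
        qed
      qed
      moreover have "\<forall>F. finite F \<and> F \<subseteq> \<U> \<longrightarrow> \<Inter>F \<noteq> {}"
      proof (intro allI impI)
        fix F assume F: "finite F \<and> F \<subseteq> \<U>"
        have sub: "F - {Fy} \<subseteq> (\<lambda>U. Fy - U) ` C" using F unfolding \<U>_def by blast
        have fin: "finite (F - {Fy})" using F by simp
        obtain C0 where C0: "C0 \<subseteq> C" "finite C0" "F - {Fy} = (\<lambda>U. Fy - U) ` C0"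
          using finite_subset_image[OF fin sub] by blast
        show "\<Inter>F \<noteq> {}"
        proof (cases "C0 = {}")
          case True
          then have "F \<subseteq> {Fy}" using C0(3) by blast
          moreover have "Fy \<noteq> {}" using yY surj unfolding Fy_def by force
          ultimately show ?thesis by blast
        next
          case False
          have "subset.chain C C0" unfolding subset_chain_def using C0(1) chC by blast
          then have U0: "\<Union>C0 \<in> C0" using Union_in_chain[OF C0(2) False] by blast
          then have "\<Union>C0 \<in> \<A>" using C0(1) CA by blast
          then have "y \<in> f ` (topspace K - \<Union>C0)" using yY unfolding \<A>_def by blast
          then obtain x where x: "x \<in> topspace K" "x \<notin> \<Union>C0" "f x = y" by blast
          have "x \<in> \<Inter>F"
          proof
            fix T assume "T \<in> F"
            show "x \<in> T"
            proof (cases "T = Fy")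
              case True then show ?thesis using x unfolding Fy_def by simp
            next
              case False
              then have "T \<in> (\<lambda>U. Fy - U) ` C0" using C0(3) \<open>T \<in> F\<close> by blast
              then obtain U where "U \<in> C0" "T = Fy - U" by blast
              then show ?thesis using x unfolding Fy_def by blast
            qed
          qed
          then show ?thesis by blast
        qed
      qed
      ultimately have "\<Inter>\<U> \<noteq> {}"
        using compact_space_fip[THEN iffD1, OF cK, rule_format, of \<U>] by blast
      then obtain x where "x \<in> \<Inter>\<U>" by blast
      then have x: "x \<in> Fy" "\<And>U. U \<in> C \<Longrightarrow> x \<notin> U" unfolding \<U>_def by blast+
      then have "x \<in> topspace K - \<Union>C" "f x = y" unfolding Fy_def by blast+
      then show "y \<in> f ` (topspace K - \<Union>C)" by blast
    qed
    moreover have "f ` (topspace K - \<Union>C) \<subseteq> topspace Y" by (rule fsub) blast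
    ultimately show "\<Union>C \<in> \<A>" unfolding \<A>_def using oC by blast
  qed
  then obtain M where M: "M \<in> \<A>" "\<And>Z. Z \<in> \<A> \<Longrightarrow> M \<subseteq> Z \<Longrightarrow> Z = M"
    using Zorn_Lemma by metis
  define L where "L = topspace K - M"
  have "closedin K L" unfolding L_def using M(1) unfolding \<A>_def by blast
  moreover have "f ` L = topspace Y" unfolding L_def using M(1) unfolding \<A>_def by blast
  moreover have "L' = L" if L': "closedin K L'" "L' \<subseteq> L" "f ` L' = topspace Y" for L'
  proof -
    have sub: "L' \<subseteq> topspace K" using L'(1) closedin_subset by blast
    then have eq: "topspace K - (topspace K - L') = L'" by blast
    have "openin K (topspace K - L')" using L'(1) by (simp add: openin_diff)
    then have "topspace K - L' \<in> \<A>" unfolding \<A>_def using L'(3) eq by simp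
    moreover have "M \<subseteq> topspace K" using M(1) openin_subset unfolding \<A>_def by blast
    then have "M \<subseteq> topspace K - L'" using L'(2) unfolding L_def by blast
    ultimately have "topspace K - L' = M" using M(2) by blast
    then show "L' = L" unfolding L_def using sub by blast
  qed
  ultimately show ?thesis using that by blast
qed

lemma irr_ccc:
  assumes cK: "compact_space K" and f: "continuous_map K Y f" and hY: "Hausdorff_space Y"
    and L: "closedin K L" "f ` L = topspace Y"
    and minL: "\<And>L'. closedin K L' \<Longrightarrow> L' \<subseteq> L \<Longrightarrow> f ` L' = topspace Y \<Longrightarrow> L' = L"
    and ccY: "ccc_space Y"
  shows "ccc_space (subtopology K L)"
  unfolding ccc_space_def
proof (intro allI impI)
  fix F assume F: "(\<forall>U\<in>F. openin (subtopology K L) U \<and> U \<noteq> {}) \<and> disjoint F"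
  define \<phi> where "\<phi> U = topspace Y - f ` (L - U)" for U
  have LK: "L \<subseteq> topspace K" using L(1) closedin_subset by blast
  show "countable F"
  proof (rule ccc_countable_family[OF ccY, of F \<phi>])
    fix U assume UF: "U \<in> F"
    then have oU: "openin (subtopology K L) U" "U \<noteq> {}" using F by blast+
    then obtain T where T: "openin K T" "U = T \<inter> L" unfolding openin_subtopology by blast
    have "L - U = L \<inter> (topspace K - T)" using T(2) LK by blast
    then have cl: "closedin K (L - U)" using L(1) T(1) by (simp add: closedin_Int closedin_diff)
    then have "compactin K (L - U)" using cK by (simp add: closedin_compact_space)
    then have "compactin Y (f ` (L - U))" using f by (rule image_compactin)
    then have "closedin Y (f ` (L - U))" using hY compactin_imp_closedin by blast
    then have "openin Y (\<phi> U)" unfolding \<phi>_def by blast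
    moreover have "\<phi> U \<noteq> {}"
    proof
      assume "\<phi> U = {}"
      then have "topspace Y \<subseteq> f ` (L - U)" unfolding \<phi>_def by blast
      moreover have "f ` (L - U) \<subseteq> topspace Y" using L(2) by blast
      ultimately have "f ` (L - U) = topspace Y" by blast
      then have "L - U = L" using minL[OF cl] by blast
      moreover have "U \<subseteq> L" using T(2) by blast
      ultimately show False using oU(2) by blast
    qed
    ultimately show "openin Y (\<phi> U) \<and> \<phi> U \<noteq> {}" by blast
  next
    fix U V assume UV: "U \<in> F" "V \<in> F" "U \<noteq> V"
    then have dUV: "disjnt U V" using F unfolding pairwise_def by blast
    show "disjnt (\<phi> U) (\<phi> V)"
      unfolding disjnt_def
    proof (rule ccontr)
      assume "\<phi> U \<inter> \<phi> V \<noteq> {}"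
      then obtain y where y: "y \<in> \<phi> U" "y \<in> \<phi> V" by blast
      then have "y \<in> f ` L" using L(2) unfolding \<phi>_def by blast
      then obtain x where x: "x \<in> L" "f x = y" by blast
      have "x \<in> U" using x y(1) unfolding \<phi>_def by blast
      moreover have "x \<in> V" using x y(2) unfolding \<phi>_def by blast
      ultimately show False using dUV unfolding disjnt_def by blast
    qed
  qed
qed

lemma frag_sub:
  assumes "fragmentable K" "L \<subseteq> topspace K"
  shows "fragmentable (subtopology K L)"
proof -
  obtain d where dM: "Metric_space (topspace K) d" and fr: "\<forall>A. A \<subseteq> topspace K \<and> A \<noteq> {} \<longrightarrow>
          (\<forall>\<epsilon>>0. \<exists>U. openin K U \<and> A \<inter> U \<noteq> {} \<and>
              (\<exists>\<delta><\<epsilon>. \<forall>x\<in>A \<inter> U. \<forall>y\<in>A \<inter> U. d x y \<le> \<delta>))"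
    using assms(1) unfolding fragmentable_def by blast
  have tL: "topspace (subtopology K L) = L" using assms(2) by auto
  have "Metric_space L d" using Metric_space.subspace[OF dM assms(2)] .
  moreover have "\<forall>A. A \<subseteq> L \<and> A \<noteq> {} \<longrightarrow>
          (\<forall>\<epsilon>>0. \<exists>U. openin (subtopology K L) U \<and> A \<inter> U \<noteq> {} \<and>
              (\<exists>\<delta><\<epsilon>. \<forall>x\<in>A \<inter> U. \<forall>y\<in>A \<inter> U. d x y \<le> \<delta>))"
  proof (intro allI impI)
    fix A :: "'a set" and \<epsilon> :: real assume A: "A \<subseteq> L \<and> A \<noteq> {}" and e: "\<epsilon> > 0"
    have "A \<subseteq> topspace K \<and> A \<noteq> {}" using A assms(2) by blast
    then obtain U \<delta> where U: "openin K U" "A \<inter> U \<noteq> {}" "\<delta> < \<epsilon>"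
      "\<forall>x\<in>A \<inter> U. \<forall>y\<in>A \<inter> U. d x y \<le> \<delta>" using fr e by meson
    have "openin (subtopology K L) (U \<inter> L)" using U(1) by (auto simp: openin_subtopology)
    moreover have "A \<inter> (U \<inter> L) = A \<inter> U" using A by blast
    ultimately show "\<exists>U. openin (subtopology K L) U \<and> A \<inter> U \<noteq> {} \<and>
              (\<exists>\<delta><\<epsilon>. \<forall>x\<in>A \<inter> U. \<forall>y\<in>A \<inter> U. d x y \<le> \<delta>)"
      using U(2,3,4) by metis
  qed
  ultimately show ?thesis unfolding fragmentable_def tL by blast
qed

lemma part2:
  fixes K :: "'a topology" and Y :: "'b topology"
  assumes K: "compact_Hausdorff K" "aleph0_monolithic K" "fragmentable K"
    and Y: "cont_image K Y" "ccc_space Y"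
  shows "metrizable_space Y"
proof -
  have cK: "compact_space K" and hK: "Hausdorff_space K" using K(1) unfolding compact_Hausdorff_def by blast+
  obtain f where f: "continuous_map K Y f" "f ` topspace K = topspace Y" and hY: "Hausdorff_space Y"
    using Y(1) unfolding cont_image_def by blast
  obtain L where L: "closedin K L" "f ` L = topspace Y"
    and minL: "\<And>L'. closedin K L' \<Longrightarrow> L' \<subseteq> L \<Longrightarrow> f ` L' = topspace Y \<Longrightarrow> L' = L"
    using irreducible_closed[OF cK f hY] by blast
  have LK: "L \<subseteq> topspace K" using L(1) closedin_subset by blast
  let ?X = "subtopology K L"
  have tX: "topspace ?X = L" using LK by auto
  have cX: "compact_space ?X"
    using closedin_compact_space[OF cK L(1)] by (rule compact_space_subtopology)
  have hX: "Hausdorff_space ?X" using hK by (rule Hausdorff_space_subtopology)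
  have ccX: "ccc_space ?X" using irr_ccc[OF cK f(1) hY L minL Y(2)] .
  have fX: "fragmentable ?X" using frag_sub[OF K(3) LK] .
  have sX: "separable_space ?X" using frag_ccc_separable[OF cX hX ccX fX] .
  have mX: "metrizable_space ?X" using K(2) LK sX unfolding aleph0_monolithic_def by blast
  have scX: "second_countable ?X" using compact_metrizable_sc[OF cX mX] .
  have fX': "continuous_map ?X Y f" using f(1) by (rule continuous_map_from_subtopology)
  have fim: "f ` topspace ?X = topspace Y" using tX L(2) by simp
  have scY: "second_countable Y" using image_second_countable[OF cX scX fX' fim hY] .
  have "compactin Y (f ` topspace ?X)"
    using cX fX' unfolding compact_space_def by (rule image_compactin)
  then have cY: "compact_space Y" unfolding compact_space_def fim .
  show ?thesis using compact_sc_metrizable[OF cY hY scY] .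
qed

theorem proposition3p11:
  shows "(\<forall>K :: 'a topology.
            compact_Hausdorff K
          \<and> (\<forall>Y :: 'a set topology. cont_image K Y \<and> separable_space Y \<longrightarrow> metrizable_space Y)
          \<and> (\<forall>Y :: 'a set topology. cont_image K Y \<longrightarrow>
                (\<exists>D. D \<subseteq> topspace Y \<and> Y closure_of D = topspace Y
                     \<and> metrizable_space (subtopology Y D)))
          \<longrightarrow> (\<forall>Y :: 'b topology. cont_image K Y \<and> ccc_space Y \<longrightarrow> metrizable_space Y))
       \<and> (\<forall>K :: 'a topology.
            compact_Hausdorff K \<and> aleph0_monolithic K \<and> fragmentable K
          \<longrightarrow> (\<forall>Y :: 'b topology. cont_image K Y \<and> ccc_space Y \<longrightarrow> metrizable_space Y))"
proof (intro conjI allI impI)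
  fix K :: "'a topology" and Y :: "'b topology"
  assume H: "compact_Hausdorff K
          \<and> (\<forall>Y :: 'a set topology. cont_image K Y \<and> separable_space Y \<longrightarrow> metrizable_space Y)
          \<and> (\<forall>Y :: 'a set topology. cont_image K Y \<longrightarrow>
                (\<exists>D. D \<subseteq> topspace Y \<and> Y closure_of D = topspace Y
                     \<and> metrizable_space (subtopology Y D)))"
    and Y: "cont_image K Y \<and> ccc_space Y"
  show "metrizable_space Y"
    using part1[of K Y] H Y by blast
next
  fix K :: "'a topology" and Y :: "'b topology"
  assume "compact_Hausdorff K \<and> aleph0_monolithic K \<and> fragmentable K"
    and "cont_image K Y \<and> ccc_space Y"
  then show "metrizable_space Y" using part2[of K Y] by blast
qed

end
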